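(* Let $(R,\mathfrak{m},k)$ be a commutative Noetherian local ring and let $\mathbf{F}$ be a minimal free resolution of $k$ over $R$. Then $\mathfrak{m}^*\operatorname{H}_n(\operatorname{lin}^R(\mathbf{F}))=0$ for all $n$, where $\mathfrak{m}^*$ is the homogeneous maximal ideal of $R^{\mathsf g}$.
   Context: $R^{\mathsf g}=\bigoplus_{i\ge0}\mathfrak{m}^i/\mathfrak{m}^{i+1}$ is the associated graded ring and $\mathfrak{m}^*=\bigoplus_{i\ge1}\mathfrak{m}^i/\mathfrak{m}^{i+1}$. A minimal free resolution $\mathbf{F}:\cdots\to F_n\xrightarrow{\partial_n}F_{n-1}\to\cdots\to F_0\to0$ consists of finitely generated free modules with $\partial(F_i)\subseteq\mathfrak{m}F_{i-1}$. The linear part $\operatorname{lin}^R(\mathbf{F})$ is the associated graded complex of the filtration $(\mathfrak{F}^p\mathbf{F})_i=\mathfrak{m}^{p-i}F_i$ ($\mathfrak{m}^j=R$ for $j\le0$); it is a complex of graded free $R^{\mathsf g}$-modules with $\operatorname{lin}^R_n(\mathbf{F})=F_n^{\mathsf g}(-n)$, $F_n^{\mathsf g}=\bigoplus_{i\ge0}\mathfrak{m}^iF_n/\mathfrak{m}^{i+1}F_n$, and differential sending the class of $x\in\mathfrak{m}^iF_n$ to the class of $\partial(x)$ in $\mathfrak{m}^{i+1}F_{n-1}/\mathfrak{m}^{i+2}F_{n-1}$. *)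

theory Defs
  imports Main
begin

definition is_ideal :: "'a::comm_ring_1 set \<Rightarrow> bool" where
  "is_ideal I \<longleftrightarrow> 0 \<in> I \<and> (\<forall>x\<in>I. \<forall>y\<in>I. x + y \<in> I) \<and> (\<forall>r. \<forall>x\<in>I. r * x \<in> I)"

definition ideal_span :: "'a::comm_ring_1 set \<Rightarrow> 'a set" where
  "ideal_span S = {y. \<exists>r. y = (\<Sum>s\<in>S. r s * s)}"

definition noetherian_ring :: "'a::comm_ring_1 itself \<Rightarrow> bool" where
  "noetherian_ring _ \<longleftrightarrow>
     (\<forall>I::'a set. is_ideal I \<longrightarrow> (\<exists>S. finite S \<and> S \<subseteq> I \<and> I = ideal_span S))"

definition local_ring_max :: "'a::comm_ring_1 set \<Rightarrow> bool" where
  "local_ring_max m \<longleftrightarrow> is_ideal m \<and> 1 \<notin> m \<and>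
     (\<forall>I. is_ideal I \<and> 1 \<notin> I \<longrightarrow> I \<subseteq> m)"

inductive_set ideal_prod :: "'a::comm_ring_1 set \<Rightarrow> 'a set \<Rightarrow> 'a set" for I J where
  zero: "0 \<in> ideal_prod I J"
| step: "a \<in> I \<Longrightarrow> c \<in> J \<Longrightarrow> y \<in> ideal_prod I J \<Longrightarrow> a * c + y \<in> ideal_prod I J"

primrec ideal_pow :: "'a::comm_ring_1 set \<Rightarrow> nat \<Rightarrow> 'a set" where
  "ideal_pow m 0 = UNIV"
| "ideal_pow m (Suc i) = ideal_prod m (ideal_pow m i)"

text \<open>The free module F_n = R^(b n), as vectors nat => R supported below b n.
  The differential d_n : F_n -> F_(n-1) (n >= 1) is the (b(n-1)) x (b n) matrix d n;
  d_0 = 0.\<close>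

definition free_mod :: "(nat \<Rightarrow> nat) \<Rightarrow> nat \<Rightarrow> (nat \<Rightarrow> 'a::comm_ring_1) set" where
  "free_mod b n = {x. \<forall>j\<ge>b n. x j = 0}"

definition diff :: "(nat \<Rightarrow> nat) \<Rightarrow> (nat \<Rightarrow> nat \<Rightarrow> nat \<Rightarrow> 'a::comm_ring_1) \<Rightarrow> nat
                     \<Rightarrow> (nat \<Rightarrow> 'a) \<Rightarrow> (nat \<Rightarrow> 'a)" where
  "diff b d n x = (\<lambda>i. if n = 0 \<or> i \<ge> b (n - 1) then 0 else (\<Sum>j<b n. d n i j * x j))"

definition in_pow_mod :: "'a::comm_ring_1 set \<Rightarrow> nat \<Rightarrow> (nat \<Rightarrow> 'a) \<Rightarrow> bool" where
  "in_pow_mod m p x \<longleftrightarrow> (\<forall>j. x j \<in> ideal_pow m p)"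

text \<open>The augmentation
  F_0 -> k is given as x |-> (eps x mod m) for an R-linear eps : F_0 -> R
  (any R-linear map from a free module to k lifts this way).\<close>
definition minimal_free_resolution_of_residue_field ::
  "'a::comm_ring_1 set \<Rightarrow> (nat \<Rightarrow> nat) \<Rightarrow> (nat \<Rightarrow> nat \<Rightarrow> nat \<Rightarrow> 'a) \<Rightarrow> ((nat \<Rightarrow> 'a) \<Rightarrow> 'a) \<Rightarrow> bool"
where
  "minimal_free_resolution_of_residue_field m b d eps \<longleftrightarrow>
     \<comment> \<open>minimality: all matrix entries of each differential lie in m\<close>
     (\<forall>n\<ge>1. \<forall>i<b (n - 1). \<forall>j<b n. d n i j \<in> m) \<and>
     \<comment> \<open>exactness at F_n, n >= 1 (includes d o d = 0)\<close>
     (\<forall>n\<ge>1. {x \<in> free_mod b n. diff b d n x = (\<lambda>_. 0)} = diff b d (Suc n) ` free_mod b (Suc n)) \<and>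
     \<comment> \<open>augmentation eps : F_0 -> R is R-linear\<close>
     (\<forall>x\<in>free_mod b 0. \<forall>y\<in>free_mod b 0. eps (\<lambda>j. x j + y j) = eps x + eps y) \<and>
     (\<forall>r. \<forall>x\<in>free_mod b 0. eps (\<lambda>j. r * x j) = r * eps x) \<and>
     \<comment> \<open>F_0 -> k is surjective\<close>
     (\<exists>x\<in>free_mod b 0. eps x \<notin> m) \<and>
     \<comment> \<open>its kernel is the image of d_1\<close>
     {x \<in> free_mod b 0. eps x \<in> m} = diff b d 1 ` free_mod b 1"

text \<open>The piece of lin_n(F) coming from m^p F_n / m^(p+1) F_n (p >= 0).
  The class of z in m^p F_n is a cycle iff d z lies in m^(p+2) F_(n-1);
  it is a boundary iff z - d y lies in m^(p+1) F_n for some y in m^(p-1) F_(n+1)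
  (m^j = R for j <= 0).  Each H_n(lin) is a graded R^g-module, generated by classes
  of homogeneous cycles, and m^* is generated (as a set of sums) by homogeneous
  elements, i.e. classes of a in m^i, i >= 1.  The class of a in m^i/m^(i+1) acts
  on the class of z in m^p F_n/m^(p+1) F_n giving the class of a z in
  m^(p+i) F_n/m^(p+i+1) F_n.\<close>

definition lin_cycle :: "'a::comm_ring_1 set \<Rightarrow> (nat \<Rightarrow> nat) \<Rightarrow> (nat \<Rightarrow> nat \<Rightarrow> nat \<Rightarrow> 'a)
                          \<Rightarrow> nat \<Rightarrow> nat \<Rightarrow> (nat \<Rightarrow> 'a) \<Rightarrow> bool" where
  "lin_cycle m b d n p z \<longleftrightarrow> z \<in> free_mod b n \<and> in_pow_mod m p z \<and>
      in_pow_mod m (p + 2) (diff b d n z)"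

definition lin_boundary_class :: "'a::comm_ring_1 set \<Rightarrow> (nat \<Rightarrow> nat) \<Rightarrow> (nat \<Rightarrow> nat \<Rightarrow> nat \<Rightarrow> 'a)
                          \<Rightarrow> nat \<Rightarrow> nat \<Rightarrow> (nat \<Rightarrow> 'a) \<Rightarrow> bool" where
  "lin_boundary_class m b d n p z \<longleftrightarrow>
     (\<exists>y\<in>free_mod b (Suc n). in_pow_mod m (p - 1) y \<and>
        in_pow_mod m (p + 1) (\<lambda>j. z j - diff b d (Suc n) y j))"

definition mstar_kills_lin_homology :: "'a::comm_ring_1 set \<Rightarrow> (nat \<Rightarrow> nat)
                          \<Rightarrow> (nat \<Rightarrow> nat \<Rightarrow> nat \<Rightarrow> 'a) \<Rightarrow> nat \<Rightarrow> bool" where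
  "mstar_kills_lin_homology m b d n \<longleftrightarrow>
     (\<forall>p i a z. 1 \<le> i \<longrightarrow> a \<in> ideal_pow m i \<longrightarrow> lin_cycle m b d n p z \<longrightarrow>
        lin_boundary_class m b d n (p + i) (\<lambda>j. a * z j))"

end

theory Submission
  imports Defs
begin

lemma ideal_prod_add:
  assumes "u \<in> ideal_prod I J" "v \<in> ideal_prod I J"
  shows "u + v \<in> ideal_prod I J"
  using assms
proof (induction u rule: ideal_prod.induct)
  case zero then show ?case by simp
next
  case (step a c y)
  then have "a * c + (y + v) \<in> ideal_prod I J" by (intro ideal_prod.step) auto
  then show ?case by (simp add: add.assoc)
qed

lemma ideal_prod_mult:
  assumes "is_ideal J" "u \<in> ideal_prod I J"
  shows "r * u \<in> ideal_prod I J"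
  using assms(2)
proof (induction u rule: ideal_prod.induct)
  case zero then show ?case by (simp add: ideal_prod.zero)
next
  case (step a c y)
  have "r * c \<in> J" using assms(1) step by (auto simp: is_ideal_def)
  then have "a * (r * c) + r * y \<in> ideal_prod I J" using step by (intro ideal_prod.step) auto
  then show ?case by (simp add: algebra_simps)
qed

lemma ideal_pow_ideal: "is_ideal (ideal_pow m k)"
proof (induction k)
  case 0 then show ?case by (simp add: is_ideal_def)
next
  case (Suc k)
  then show ?case
    by (auto simp: is_ideal_def intro: ideal_prod.zero ideal_prod_add ideal_prod_mult)
qed

lemma ip0: "0 \<in> ideal_pow m k"
  using ideal_pow_ideal[of m k] by (simp add: is_ideal_def)

lemma ipadd: "u \<in> ideal_pow m k \<Longrightarrow> v \<in> ideal_pow m k \<Longrightarrow> u + v \<in> ideal_pow m k"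
  using ideal_pow_ideal[of m k] by (simp add: is_ideal_def)

lemma ipmult: "u \<in> ideal_pow m k \<Longrightarrow> r * u \<in> ideal_pow m k"
  using ideal_pow_ideal[of m k] by (simp add: is_ideal_def)

lemma ipmult2: "u \<in> ideal_pow m k \<Longrightarrow> u * r \<in> ideal_pow m k"
  using ipmult[of u m k r] by (simp add: mult.commute)

lemma ipdiff: "u \<in> ideal_pow m k \<Longrightarrow> v \<in> ideal_pow m k \<Longrightarrow> u - v \<in> ideal_pow m k"
  using ipadd[of u m k "(-1) * v"] ipmult[of v m k "-1"] by simp

lemma ipsum: "(\<And>j. j \<in> A \<Longrightarrow> f j \<in> ideal_pow m k) \<Longrightarrow> sum f A \<in> ideal_pow m k"
proof (induction A rule: infinite_finite_induct)
  case (infinite A) then show ?case by (simp add: ip0)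
next
  case empty then show ?case by (simp add: ip0)
next
  case (insert x F) then show ?case by (simp add: ipadd)
qed

lemma ippow_mult:
  "u \<in> ideal_pow m k \<Longrightarrow> v \<in> ideal_pow m l \<Longrightarrow> u * v \<in> ideal_pow m (k + l)"
proof (induction k arbitrary: u)
  case 0 then show ?case by (simp add: ipmult)
next
  case (Suc k)
  have "u \<in> ideal_prod m (ideal_pow m k)" using Suc.prems by simp
  then have "u * v \<in> ideal_prod m (ideal_pow m (k + l))"
  proof (induction u rule: ideal_prod.induct)
    case zero then show ?case by (simp add: ideal_prod.zero)
  next
    case (step a c y)
    have "c * v \<in> ideal_pow m (k + l)" using Suc.IH step Suc.prems by auto
    then have "a * (c * v) + y * v \<in> ideal_prod m (ideal_pow m (k + l))"
      using step by (intro ideal_prod.step) auto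
    then show ?case by (simp add: algebra_simps)
  qed
  then show ?case by simp
qed

definition evec :: "nat \<Rightarrow> nat \<Rightarrow> 'a::comm_ring_1" where
  "evec j = (\<lambda>k. if k = j then 1 else 0)"

definition sapp :: "(nat \<Rightarrow> nat \<Rightarrow> 'a::comm_ring_1) \<Rightarrow> nat \<Rightarrow> (nat \<Rightarrow> 'a) \<Rightarrow> (nat \<Rightarrow> 'a)" where
  "sapp C c w = (\<lambda>i. \<Sum>j<c. w j * C j i)"

lemma expand_free:
  assumes "w \<in> free_mod b n"
  shows "w = (\<lambda>k. \<Sum>j<b n. w j * evec j k)"
proof
  fix k
  show "w k = (\<Sum>j<b n. w j * evec j k)"
  proof (cases "k < b n")
    case True
    have "(\<Sum>j<b n. w j * evec j k) = (\<Sum>j\<in>{k}. w j * evec j k)"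
      by (rule sum.mono_neutral_right) (auto simp: evec_def True)
    then show ?thesis by (simp add: evec_def)
  next
    case False
    then show ?thesis using assms by (auto simp: free_mod_def evec_def intro!: sum.neutral)
  qed
qed

lemma diff_lin_sum:
  "diff b d n (\<lambda>k. \<Sum>j<c. w j * C j k) = (\<lambda>k. \<Sum>j<c. w j * diff b d n (C j) k)"
  unfolding diff_def
  by (auto simp: sum_distrib_left algebra_simps intro!: ext sum.swap)

lemma sapp_lin_sum:
  "sapp C c' (\<lambda>k. \<Sum>j<c. w j * V j k) = (\<lambda>k. \<Sum>j<c. w j * sapp C c' (V j) k)"
  unfolding sapp_def
  by (auto simp: sum_distrib_left sum_distrib_right algebra_simps intro!: ext sum.swap)

lemma diff_lin2:
  "diff b d n (\<lambda>k. c * u k + v k) = (\<lambda>k. c * diff b d n u k + diff b d n v k)"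
  unfolding diff_def
  by (auto simp: sum.distrib sum_distrib_left algebra_simps intro!: ext)

lemma diffm_zero: "diff b d n (\<lambda>_. 0) = (\<lambda>_. 0)"
  unfolding diff_def by auto

lemma sapp_zero: "sapp C c (\<lambda>_. 0) = (\<lambda>_. 0)"
  unfolding sapp_def by auto

lemma diff_free: "diff b d (Suc n) y \<in> free_mod b n"
  unfolding diff_def free_mod_def by auto

lemma evec_free: "j < b n \<Longrightarrow> evec j \<in> free_mod b n"
  unfolding evec_def free_mod_def by auto

lemma sapp_pow:
  "in_pow_mod m q w \<Longrightarrow> in_pow_mod m q (sapp C c w)"
  unfolding in_pow_mod_def sapp_def by (auto intro!: ipsum ipmult2)

lemma diff_pow:
  "in_pow_mod m q w \<Longrightarrow> in_pow_mod m q (diff b d n w)"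
  unfolding in_pow_mod_def diff_def by (auto intro!: ipsum ipmult simp: ip0)

section \<open>The null-homotopy of multiplication by x\<close>

primrec Smat :: "(nat \<Rightarrow> nat) \<Rightarrow> (nat \<Rightarrow> nat \<Rightarrow> nat \<Rightarrow> 'a::comm_ring_1) \<Rightarrow> 'a
                \<Rightarrow> nat \<Rightarrow> nat \<Rightarrow> (nat \<Rightarrow> 'a)" where
  "Smat b d x 0 = (\<lambda>j. SOME y. y \<in> free_mod b 1 \<and>
       diff b d 1 y = (\<lambda>k. x * evec j k - 0))"
| "Smat b d x (Suc n) = (\<lambda>j. SOME y. y \<in> free_mod b (Suc (Suc n)) \<and>
       diff b d (Suc (Suc n)) y = (\<lambda>k. x * evec j k - sapp (Smat b d x n) (b n) (diff b d (Suc n) (evec j)) k))"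

primrec hp :: "(nat \<Rightarrow> nat) \<Rightarrow> (nat \<Rightarrow> nat \<Rightarrow> nat \<Rightarrow> 'a::comm_ring_1) \<Rightarrow> 'a
                \<Rightarrow> nat \<Rightarrow> (nat \<Rightarrow> 'a) \<Rightarrow> (nat \<Rightarrow> 'a)" where
  "hp b d x 0 = (\<lambda>w. (\<lambda>_. 0))"
| "hp b d x (Suc n) = sapp (Smat b d x n) (b n)"

lemma Smat_eq: "Smat b d x n = (\<lambda>j. SOME y. y \<in> free_mod b (Suc n) \<and>
       diff b d (Suc n) y = (\<lambda>k. x * evec j k - hp b d x n (diff b d n (evec j)) k))"
  by (cases n) simp_all

lemma hp_lin_sum:
  "hp b d x n (\<lambda>k. \<Sum>j<c. w j * V j k) = (\<lambda>k. \<Sum>j<c. w j * hp b d x n (V j) k)"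
  by (cases n) (simp_all add: sapp_lin_sum)

lemma hp_zero: "hp b d x n (\<lambda>_. 0) = (\<lambda>_. 0)"
  by (cases n) (simp_all add: sapp_zero)

lemma hp_pow: "in_pow_mod m q w \<Longrightarrow> in_pow_mod m q (hp b d x n w)"
proof (cases n)
  case 0 then show ?thesis by (simp add: in_pow_mod_def ip0)
next
  case (Suc k)
  assume "in_pow_mod m q w"
  then show ?thesis using Suc by (simp add: sapp_pow)
qed

context
  fixes m :: "'a::comm_ring_1 set" and b d eps x
  assumes mi: "is_ideal m"
    and res: "minimal_free_resolution_of_residue_field m b d eps"
    and xm: "x \<in> m"
begin

lemma res_exact: "n \<ge> 1 \<Longrightarrow> {z \<in> free_mod b n. diff b d n z = (\<lambda>_. 0)} = diff b d (Suc n) ` free_mod b (Suc n)"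
  using res unfolding minimal_free_resolution_of_residue_field_def by (elim conjE) simp

lemma res_aug: "{z \<in> free_mod b 0. eps z \<in> m} = diff b d 1 ` free_mod b 1"
  using res unfolding minimal_free_resolution_of_residue_field_def by (elim conjE) assumption

lemma res_lin: "\<forall>r. \<forall>z\<in>free_mod b 0. eps (\<lambda>j. r * z j) = r * eps z"
  using res unfolding minimal_free_resolution_of_residue_field_def by (elim conjE) assumption

lemma CZ: "y \<in> free_mod b (Suc n) \<Longrightarrow> diff b d n (diff b d (Suc n) y) = (\<lambda>_. 0)"
proof (cases n)
  case 0 then show ?thesis by (simp add: diff_def)
next
  case (Suc k)
  assume y: "y \<in> free_mod b (Suc n)"
  have "{z \<in> free_mod b n. diff b d n z = (\<lambda>_. 0)} = diff b d (Suc n) ` free_mod b (Suc n)"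
    using res_exact Suc by simp
  then show ?thesis using y by blast
qed

lemma H_of_S:
  assumes S: "\<forall>j<b n. Smat b d x n j \<in> free_mod b (Suc n) \<and>
       diff b d (Suc n) (Smat b d x n j) = (\<lambda>k. x * evec j k - hp b d x n (diff b d n (evec j)) k)"
    and w: "w \<in> free_mod b n"
  shows "diff b d (Suc n) (hp b d x (Suc n) w) = (\<lambda>k. x * w k - hp b d x n (diff b d n w) k)"
proof -
  have we: "w = (\<lambda>k. \<Sum>j<b n. w j * evec j k)" by (rule expand_free[OF w])
  have "diff b d (Suc n) (hp b d x (Suc n) w)
      = (\<lambda>k. \<Sum>j<b n. w j * diff b d (Suc n) (Smat b d x n j) k)"
    by (simp add: sapp_def diff_lin_sum)
  also have "\<dots> = (\<lambda>k. \<Sum>j<b n. w j * (x * evec j k - hp b d x n (diff b d n (evec j)) k))"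
    using S by (auto intro!: ext sum.cong)
  also have "\<dots> = (\<lambda>k. x * (\<Sum>j<b n. w j * evec j k)
        - hp b d x n (\<lambda>k. \<Sum>j<b n. w j * diff b d n (evec j) k) k)"
    by (simp add: hp_lin_sum sum_distrib_left sum_subtractf algebra_simps)
  also have "\<dots> = (\<lambda>k. x * w k - hp b d x n (diff b d n w) k)"
  proof -
    have D: "diff b d n w = (\<lambda>k. \<Sum>j<b n. w j * diff b d n (evec j) k)"
      by (subst we) (simp add: diff_lin_sum)
    have e2: "\<And>k. (\<Sum>j<b n. w j * evec j k) = w k" using we by (metis)
    show ?thesis by (simp only: D[symmetric] e2)
  qed
  finally show ?thesis .
qed

lemma S_all: "\<forall>j<b n. Smat b d x n j \<in> free_mod b (Suc n) \<and>
       diff b d (Suc n) (Smat b d x n j) = (\<lambda>k. x * evec j k - hp b d x n (diff b d n (evec j)) k)"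
proof (induction n)
  case 0
  show ?case
  proof (intro allI impI)
    fix j assume j: "j < b 0"
    let ?t = "(\<lambda>k. x * evec j k) :: nat \<Rightarrow> 'a"
    have tf: "?t \<in> free_mod b 0" using j by (auto simp: free_mod_def evec_def)
    have ej: "evec j \<in> free_mod b 0" using j by (rule evec_free)
    have e1: "eps ?t = x * eps (evec j)" by (rule res_lin[rule_format, OF ej])
    have "eps (evec j) * x \<in> m" using mi xm by (simp add: is_ideal_def)
    then have "eps ?t \<in> m" using e1 by (simp add: mult.commute)
    then have "?t \<in> {z \<in> free_mod b 0. eps z \<in> m}" using tf by simp
    then have "?t \<in> diff b d 1 ` free_mod b 1"
      using res_aug by simp
    then obtain y where "?t = diff b d 1 y" "y \<in> free_mod b 1" by (erule imageE)
    then have ex: "\<exists>y. y \<in> free_mod b (Suc 0) \<and>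
       diff b d (Suc 0) y = (\<lambda>k. x * evec j k - hp b d x 0 (diff b d 0 (evec j)) k)"
      by (intro exI[of _ y]) simp
    show "Smat b d x 0 j \<in> free_mod b (Suc 0) \<and>
       diff b d (Suc 0) (Smat b d x 0 j) = (\<lambda>k. x * evec j k - hp b d x 0 (diff b d 0 (evec j)) k)"
      unfolding Smat_eq[of b d x 0] by (rule someI_ex[OF ex])
  qed
next
  case (Suc n)
  show ?case
  proof (intro allI impI)
    fix j assume j: "j < b (Suc n)"
    let ?v = "diff b d (Suc n) (evec j)"
    let ?t = "(\<lambda>k. x * evec j k - hp b d x (Suc n) ?v k)"
    have ej: "evec j \<in> free_mod b (Suc n)" using j by (rule evec_free)
    have vf: "?v \<in> free_mod b n" by (rule diff_free)
    have tf: "?t \<in> free_mod b (Suc n)"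
    proof -
      have "hp b d x (Suc n) ?v k = 0" if "k \<ge> b (Suc n)" for k
        using Suc.IH that by (auto simp: sapp_def free_mod_def intro!: sum.neutral)
      moreover have "evec j k = (0::'a)" if "k \<ge> b (Suc n)" for k
        using j that by (simp add: evec_def)
      ultimately have "?t k = 0" if "k \<ge> b (Suc n)" for k
      proof -
        assume A: "\<And>k. b (Suc n) \<le> k \<Longrightarrow> hp b d x (Suc n) ?v k = 0"
          and B: "\<And>k. b (Suc n) \<le> k \<Longrightarrow> evec j k = (0::'a)"
        show ?thesis using A[OF that] B[OF that] by simp
      qed
      then show ?thesis unfolding free_mod_def by blast
    qed
    have H: "diff b d (Suc n) (hp b d x (Suc n) ?v) = (\<lambda>k. x * ?v k - hp b d x n (diff b d n ?v) k)"
      by (rule H_of_S[OF Suc.IH vf])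
    have "diff b d (Suc n) ?t = (\<lambda>k. x * ?v k - diff b d (Suc n) (hp b d x (Suc n) ?v) k)"
      using diff_lin2[of b d "Suc n" x "evec j" "\<lambda>k. - hp b d x (Suc n) ?v k"]
        diff_lin2[of b d "Suc n" "-1" "hp b d x (Suc n) ?v" "\<lambda>_. 0"]
      by (simp add: diffm_zero)
    also have "\<dots> = (\<lambda>_. 0)" using H CZ[OF ej] by (simp add: hp_zero)
    finally have "?t \<in> {z \<in> free_mod b (Suc n). diff b d (Suc n) z = (\<lambda>_. 0)}" using tf by simp
    then have "?t \<in> diff b d (Suc (Suc n)) ` free_mod b (Suc (Suc n))"
      using res_exact[of "Suc n"] by simp
    then obtain y where "?t = diff b d (Suc (Suc n)) y" "y \<in> free_mod b (Suc (Suc n))" by (erule imageE)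
    then have ex: "\<exists>y. y \<in> free_mod b (Suc (Suc n)) \<and> diff b d (Suc (Suc n)) y = ?t"
      by (intro exI[of _ y]) simp
    show "Smat b d x (Suc n) j \<in> free_mod b (Suc (Suc n)) \<and>
       diff b d (Suc (Suc n)) (Smat b d x (Suc n) j) = ?t"
      unfolding Smat_eq[of b d x "Suc n"] by (rule someI_ex[OF ex])
  qed
qed

lemma key1:
  assumes z: "z \<in> free_mod b n" "in_pow_mod m p z" "in_pow_mod m (p + 2) (diff b d n z)"
  shows "\<exists>y\<in>free_mod b (Suc n). in_pow_mod m p y \<and>
           in_pow_mod m (p + 2) (\<lambda>j. x * z j - diff b d (Suc n) y j)"
proof (intro bexI conjI)
  let ?y = "hp b d x (Suc n) z"
  show "?y \<in> free_mod b (Suc n)"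
    using S_all[of n] by (auto simp: sapp_def free_mod_def intro!: sum.neutral)
  show "in_pow_mod m p ?y" using z by (simp add: sapp_pow)
  have "(\<lambda>j. x * z j - diff b d (Suc n) ?y j) = hp b d x n (diff b d n z)"
    using H_of_S[OF S_all z(1)] by simp
  then show "in_pow_mod m (p + 2) (\<lambda>j. x * z j - diff b d (Suc n) ?y j)"
    using hp_pow[OF z(3)] by simp
qed

end

lemma general:
  assumes mi: "is_ideal m" and res: "minimal_free_resolution_of_residue_field m b d eps"
    and z: "z \<in> free_mod b n" "in_pow_mod m p z" "in_pow_mod m (p + 2) (diff b d n z)"
    and a: "a \<in> ideal_prod m (ideal_pow m k)"
  shows "\<exists>y\<in>free_mod b (Suc n). in_pow_mod m (p + k) y \<and>
           in_pow_mod m (p + k + 2) (\<lambda>j. a * z j - diff b d (Suc n) y j)"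
  using a
proof (induction a rule: ideal_prod.induct)
  case zero
  show ?case
  proof (rule bexI[of _ "\<lambda>_. 0"])
    have "in_pow_mod m q (\<lambda>_. 0)" for q by (simp only: in_pow_mod_def ip0 simp_thms)
    then show "in_pow_mod m (p + k) (\<lambda>_. 0) \<and>
      in_pow_mod m (p + k + 2) (\<lambda>j. 0 * z j - diff b d (Suc n) (\<lambda>_. 0) j)"
      by (simp only: diffm_zero mult_zero_left diff_self)
    show "(\<lambda>_. 0) \<in> free_mod b (Suc n)" by (simp add: free_mod_def)
  qed
next
  case (step x c a')
  obtain y1 where y1: "y1 \<in> free_mod b (Suc n)" "in_pow_mod m p y1"
      "in_pow_mod m (p + 2) (\<lambda>j. x * z j - diff b d (Suc n) y1 j)"
    using key1[OF mi res step(1) z] by blast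
  obtain y2 where y2: "y2 \<in> free_mod b (Suc n)" "in_pow_mod m (p + k) y2"
      "in_pow_mod m (p + k + 2) (\<lambda>j. a' * z j - diff b d (Suc n) y2 j)"
    using step.IH by blast
  let ?y = "\<lambda>j. c * y1 j + y2 j"
  show ?case
  proof (intro bexI conjI)
    show "?y \<in> free_mod b (Suc n)" using y1 y2 by (auto simp: free_mod_def)
    show "in_pow_mod m (p + k) ?y"
      unfolding in_pow_mod_def
    proof
      fix j
      have "c * y1 j \<in> ideal_pow m (k + p)" using step(2) y1(2) unfolding in_pow_mod_def
        by (simp add: ippow_mult)
      then have "c * y1 j \<in> ideal_pow m (p + k)" by (simp add: add.commute)
      then show "c * y1 j + y2 j \<in> ideal_pow m (p + k)" using y2(2) unfolding in_pow_mod_def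
        by (simp add: ipadd)
    qed
    have eq: "(\<lambda>j. (x * c + a') * z j - diff b d (Suc n) ?y j)
       = (\<lambda>j. c * (x * z j - diff b d (Suc n) y1 j) + (a' * z j - diff b d (Suc n) y2 j))"
      by (simp only: diff_lin2) (simp add: algebra_simps)
    show "in_pow_mod m (p + k + 2) (\<lambda>j. (x * c + a') * z j - diff b d (Suc n) ?y j)"
      unfolding eq in_pow_mod_def
    proof
      fix j
      have "c * (x * z j - diff b d (Suc n) y1 j) \<in> ideal_pow m (k + (p + 2))"
        by (rule ippow_mult[OF step(2) y1(3)[unfolded in_pow_mod_def, rule_format]])
      moreover have "k + (p + 2) = p + k + 2" by simp
      ultimately have "c * (x * z j - diff b d (Suc n) y1 j) \<in> ideal_pow m (p + k + 2)" by metis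
      then show "c * (x * z j - diff b d (Suc n) y1 j) + (a' * z j - diff b d (Suc n) y2 j)
          \<in> ideal_pow m (p + k + 2)"
        by (rule ipadd[OF _ y2(3)[unfolded in_pow_mod_def, rule_format]])
    qed
  qed
qed

theorem corollary2p5:
  fixes m :: "'a::comm_ring_1 set"
    and b :: "nat \<Rightarrow> nat"
    and d :: "nat \<Rightarrow> nat \<Rightarrow> nat \<Rightarrow> 'a"
    and eps :: "(nat \<Rightarrow> 'a) \<Rightarrow> 'a"
  assumes "noetherian_ring TYPE('a)"
    and "local_ring_max m"
    and "minimal_free_resolution_of_residue_field m b d eps"
  shows "\<forall>n. mstar_kills_lin_homology m b d n"
proof (intro allI)
  fix n
  have mi: "is_ideal m" using assms(2) by (simp add: local_ring_max_def)
  show "mstar_kills_lin_homology m b d n"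
    unfolding mstar_kills_lin_homology_def
  proof (intro allI impI)
    fix p i a z
    assume i: "1 \<le> i" and a: "a \<in> ideal_pow m i" and zc: "lin_cycle m b d n p z"
    obtain k where k: "i = Suc k" using i by (cases i) auto
    have a': "a \<in> ideal_prod m (ideal_pow m k)" using a k by simp
    have z: "z \<in> free_mod b n" "in_pow_mod m p z" "in_pow_mod m (p + 2) (diff b d n z)"
      using zc by (auto simp: lin_cycle_def)
    obtain y where "y\<in>free_mod b (Suc n)" "in_pow_mod m (p + k) y"
        "in_pow_mod m (p + k + 2) (\<lambda>j. a * z j - diff b d (Suc n) y j)"
      using general[OF mi assms(3) z a'] by blast
    moreover have "p + i - 1 = p + k" "p + i + 1 = p + k + 2" using k by auto
    ultimately show "lin_boundary_class m b d n (p + i) (\<lambda>j. a * z j)"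
      unfolding lin_boundary_class_def by auto
  qed
qed

end
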